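(* Let $\eta$ be a (sufficiently regular, e.g. classical) solution of the uniformly compressing curve-shortening flow described below, with $L(t)=L(\eta(t))$. Then (i) $\partial_t L=-L^{-3}\int_0^1\tilde\sigma\,|\partial_{ss}\eta|^2\,ds$; (ii) $\partial_{tt}\big(L(t)^2\big)\ge 0$.
   Context: $\mathbb S^1=\mathbb R/\mathbb Z$, $d\ge 2$, $L(\eta)=\int_0^1|\partial_s\eta|\,ds$. The uniformly compressing curve-shortening flow is: $\eta:[0,t^\ast)\times\mathbb S^1\to\mathbb R^d$ with, for each $t$, $\int_0^1\eta(t,s)\,ds=0$ and $|\partial_s\eta(t,s)|=L(t)>0$ for all $s$, satisfying $$\partial_t\eta=L(t)^{-2}\partial_s(\tilde\sigma\,\partial_s\eta),$$ where the function $\tilde\sigma(t,\cdot):\mathbb S^1\to\mathbb R$ satisfies, for all $(t,s)$, $$\partial_{ss}\tilde\sigma-L^{-2}\tilde\sigma|\partial_{ss}\eta|^2=-L^{-2}\int_0^1\tilde\sigma|\partial_{ss}\eta|^2\,ds,\qquad \int_0^1\tilde\sigma(t,s)\,ds=1.$$ *)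

theory Defs
  imports "HOL-Analysis.Analysis"
begin

text \<open>Functions of (t,s) are written curried: f t s. The circle S^1 = R/Z is
represented by 1-periodic functions of s on R.\<close>

definition ds :: "(real \<Rightarrow> real \<Rightarrow> 'a::real_normed_vector) \<Rightarrow> real \<Rightarrow> real \<Rightarrow> 'a" where
  "ds f t s = vector_derivative (\<lambda>r. f t r) (at s)"

definition dt :: "(real \<Rightarrow> real \<Rightarrow> 'a::real_normed_vector) \<Rightarrow> real \<Rightarrow> real \<Rightarrow> 'a" where
  "dt f t s = vector_derivative (\<lambda>r. f r s) (at t)"

fun Ck_on :: "nat \<Rightarrow> (real \<times> real) set \<Rightarrow> (real \<Rightarrow> real \<Rightarrow> 'a::real_normed_vector) \<Rightarrow> bool" where
  "Ck_on 0 U f = continuous_on U (\<lambda>p. f (fst p) (snd p))"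
| "Ck_on (Suc k) U f =
     (continuous_on U (\<lambda>p. f (fst p) (snd p)) \<and>
      (\<forall>p\<in>U. ((\<lambda>r. f (fst p) r) has_vector_derivative ds f (fst p) (snd p)) (at (snd p)) \<and>
              ((\<lambda>r. f r (snd p)) has_vector_derivative dt f (fst p) (snd p)) (at (fst p))) \<and>
      Ck_on k U (ds f) \<and> Ck_on k U (dt f))"

definition smooth_on2 :: "(real \<times> real) set \<Rightarrow> (real \<Rightarrow> real \<Rightarrow> 'a::real_normed_vector) \<Rightarrow> bool" where
  "smooth_on2 U f = (\<forall>k. Ck_on k U f)"

definition curve_length :: "(real \<Rightarrow> real \<Rightarrow> 'a::euclidean_space) \<Rightarrow> real \<Rightarrow> real" where
  "curve_length \<eta> t = integral {0..1} (\<lambda>s. norm (ds \<eta> t s))"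

definition ucsf :: "real \<Rightarrow> (real \<Rightarrow> real \<Rightarrow> 'a::euclidean_space) \<Rightarrow> (real \<Rightarrow> real \<Rightarrow> real) \<Rightarrow> bool" where
  "ucsf tstar \<eta> \<sigma> \<longleftrightarrow>
     0 < tstar \<and>
     smooth_on2 ({0<..<tstar} \<times> UNIV) \<eta> \<and> smooth_on2 ({0<..<tstar} \<times> UNIV) \<sigma> \<and>
     (\<forall>t\<in>{0<..<tstar}. \<forall>s. \<eta> t (s + 1) = \<eta> t s \<and> \<sigma> t (s + 1) = \<sigma> t s) \<and>
     (\<forall>t\<in>{0<..<tstar}. integral {0..1} (\<eta> t) = 0) \<and>
     (\<forall>t\<in>{0<..<tstar}. 0 < curve_length \<eta> t \<and>
         (\<forall>s. norm (ds \<eta> t s) = curve_length \<eta> t)) \<and>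
     (\<forall>t\<in>{0<..<tstar}. \<forall>s.
         dt \<eta> t s = (1 / (curve_length \<eta> t)^2) *\<^sub>R ds (\<lambda>t' s'. \<sigma> t' s' *\<^sub>R ds \<eta> t' s') t s) \<and>
     (\<forall>t\<in>{0<..<tstar}. \<forall>s.
         ds (ds \<sigma>) t s - \<sigma> t s * (norm (ds (ds \<eta>) t s))^2 / (curve_length \<eta> t)^2
           = - integral {0..1} (\<lambda>r. \<sigma> t r * (norm (ds (ds \<eta>) t r))^2) / (curve_length \<eta> t)^2) \<and>
     (\<forall>t\<in>{0<..<tstar}. integral {0..1} (\<sigma> t) = 1)"

end

theory Submission
  imports Defs
begin

lemma smooth_Ck: "smooth_on2 U f \<Longrightarrow> Ck_on k U f"
  by (simp add: smooth_on2_def)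

lemma smooth_ds: assumes "smooth_on2 U f" shows "smooth_on2 U (ds f)"
proof -
  have "Ck_on (Suc k) U f" for k using assms by (simp add: smooth_on2_def)
  then show ?thesis by (simp add: smooth_on2_def)
qed

lemma smooth_dt: assumes "smooth_on2 U f" shows "smooth_on2 U (dt f)"
proof -
  have "Ck_on (Suc k) U f" for k using assms by (simp add: smooth_on2_def)
  then show ?thesis by (simp add: smooth_on2_def)
qed

lemma smooth_cont: assumes "smooth_on2 U f" shows "continuous_on U (\<lambda>p. f (fst p) (snd p))"
proof -
  have "Ck_on 0 U f" using assms by (simp add: smooth_on2_def)
  then show ?thesis by simp
qed

lemma smooth_ds_deriv: assumes "smooth_on2 U f" "(t, s) \<in> U" shows
   "((\<lambda>r. f t r) has_vector_derivative ds f t s) (at s)"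
proof -
  have "Ck_on (Suc 0) U f" using assms by (simp add: smooth_on2_def)
  then have "\<forall>p\<in>U. ((\<lambda>r. f (fst p) r) has_vector_derivative ds f (fst p) (snd p)) (at (snd p))" by simp
  from bspec[OF this assms(2)] show ?thesis by simp
qed

lemma smooth_dt_deriv: assumes "smooth_on2 U f" "(t, s) \<in> U" shows
   "((\<lambda>r. f r s) has_vector_derivative dt f t s) (at t)"
proof -
  have "Ck_on (Suc 0) U f" using assms by (simp add: smooth_on2_def)
  then have "\<forall>p\<in>U. ((\<lambda>r. f r (snd p)) has_vector_derivative dt f (fst p) (snd p)) (at (fst p))" by simp
  from bspec[OF this assms(2)] show ?thesis by simp
qed

lemma cont_split: "continuous_on U (\<lambda>p. f (fst p) (snd p)) \<Longrightarrow> continuous_on U (\<lambda>(x,y). f x y)"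
  by (simp add: case_prod_beta)

lemma smooth_cont_s: assumes sm: "smooth_on2 ({a<..<b} \<times> UNIV) f" and tin: "t \<in> {a<..<b}"
  shows "continuous_on S (f t)"
proof -
  from sm have c: "continuous_on ({a<..<b} \<times> UNIV) (\<lambda>p. f (fst p) (snd p))" by (rule smooth_cont)
  have "continuous_on S ((\<lambda>p. f (fst p) (snd p)) \<circ> (\<lambda>s. (t, s)))"
  proof (rule continuous_on_compose)
    show "continuous_on S (\<lambda>s. (t, s))" by (intro continuous_intros)
    have "(\<lambda>s. (t, s)) ` S \<subseteq> {a<..<b} \<times> UNIV" using tin by auto
    then show "continuous_on ((\<lambda>s. (t, s)) ` S) (\<lambda>p. f (fst p) (snd p))" using c continuous_on_subset by blast
  qed
  then show ?thesis by (simp add: o_def)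
qed

lemma smooth_cont_t: assumes sm: "smooth_on2 ({a<..<b} \<times> UNIV) f" and Ss: "S \<subseteq> {a<..<b}"
  shows "continuous_on S (\<lambda>t. f t s)"
proof -
  from sm have c: "continuous_on ({a<..<b} \<times> UNIV) (\<lambda>p. f (fst p) (snd p))" by (rule smooth_cont)
  have "continuous_on S ((\<lambda>p. f (fst p) (snd p)) \<circ> (\<lambda>t. (t, s)))"
  proof (rule continuous_on_compose)
    show "continuous_on S (\<lambda>t. (t, s))" by (intro continuous_intros)
    have "(\<lambda>t. (t, s)) ` S \<subseteq> {a<..<b} \<times> UNIV" using Ss by auto
    then show "continuous_on ((\<lambda>t. (t, s)) ` S) (\<lambda>p. f (fst p) (snd p))" using c continuous_on_subset by blast
  qed
  then show ?thesis by (simp add: o_def)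
qed

lemma periodic_deriv:
  fixes g :: "real \<Rightarrow> 'a::real_normed_vector"
  assumes per: "\<And>r. g (r + 1) = g r"
    and d1: "(g has_vector_derivative g1) (at (s + 1))"
    and d2: "(g has_vector_derivative g2) (at s)"
  shows "g1 = g2"
proof -
  have "((\<lambda>r. g (r + 1)) has_vector_derivative g1) (at s)"
  proof -
    have "((\<lambda>r. r + 1) has_vector_derivative 1) (at s)"
      by (auto intro!: derivative_eq_intros)
    from vector_diff_chain_at[OF this] d1 show ?thesis by (simp add: o_def)
  qed
  then have "(g has_vector_derivative g1) (at s)" using per by simp
  then show ?thesis using d2 vector_derivative_unique_at by blast
qed

lemma swap_partials:
  fixes f :: "real \<Rightarrow> real \<Rightarrow> 'a::euclidean_space"
  assumes sm: "smooth_on2 ({a<..<b} \<times> UNIV) f" and t0: "t0 \<in> {a<..<b}"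
  shows "dt (ds f) t0 s = ds (dt f) t0 s"
proof -
  define V where "V = {a<..<b::real}"
  define c where "c = s - 1"
  define d where "d = s + 1"
  have oV: "open V" and cV: "convex V" by (auto simp: V_def)
  have t0V: "t0 \<in> V" using t0 by (simp add: V_def)
  have smds: "smooth_on2 ({a<..<b} \<times> UNIV) (ds f)" by (rule smooth_ds[OF sm])
  have smdt: "smooth_on2 ({a<..<b} \<times> UNIV) (dt f)" by (rule smooth_dt[OF sm])
  have smdtds: "smooth_on2 ({a<..<b} \<times> UNIV) (dt (ds f))" by (rule smooth_dt[OF smds])
  have FTC: "f \<tau> x - f \<tau> c = integral {c..x} (ds f \<tau>)" if "\<tau> \<in> V" "x \<in> {c..d}" for \<tau> x
  proof -
    have "(ds f \<tau> has_integral (f \<tau> x - f \<tau> c)) {c..x}"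
    proof (rule fundamental_theorem_of_calculus)
      show "c \<le> x" using that by simp
      fix y assume "y \<in> {c..x}"
      have "((\<lambda>r. f \<tau> r) has_vector_derivative ds f \<tau> y) (at y)"
        by (rule smooth_ds_deriv[OF sm]) (use that in \<open>auto simp: V_def\<close>)
      then show "(f \<tau> has_vector_derivative ds f \<tau> y) (at y within {c..x})"
        by (simp add: has_vector_derivative_at_within)
    qed
    then show ?thesis by (simp add: integral_unique)
  qed
  have LB: "((\<lambda>\<tau>. integral {c..x} (ds f \<tau>)) has_vector_derivative integral {c..x} (dt (ds f) t0)) (at t0)"
    if "x \<in> {c..d}" for x
  proof -
    have "((\<lambda>\<tau>. integral (cbox c x) (ds f \<tau>)) has_vector_derivative integral (cbox c x) (dt (ds f) t0)) (at t0 within V)"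
    proof (rule leibniz_rule_vector_derivative[where fx = "dt (ds f)"])
      fix \<tau> r assume "\<tau> \<in> V" "r \<in> cbox c x"
      then have "((\<lambda>\<tau>. ds f \<tau> r) has_vector_derivative dt (ds f) \<tau> r) (at \<tau>)"
        by (intro smooth_dt_deriv[OF smds]) (auto simp: V_def)
      then show "((\<lambda>\<tau>. ds f \<tau> r) has_vector_derivative dt (ds f) \<tau> r) (at \<tau> within V)"
        by (simp add: has_vector_derivative_at_within)
    next
      fix \<tau> assume "\<tau> \<in> V"
      then have "continuous_on (cbox c x) (ds f \<tau>)" by (intro smooth_cont_s[OF smds]) (auto simp: V_def)
      then show "ds f \<tau> integrable_on cbox c x" by (rule integrable_continuous)
    next
      have "continuous_on ({a<..<b} \<times> UNIV) (\<lambda>p. dt (ds f) (fst p) (snd p))" by (rule smooth_cont[OF smdtds])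
      then have "continuous_on (V \<times> cbox c x) (\<lambda>p. dt (ds f) (fst p) (snd p))"
        by (rule continuous_on_subset) (auto simp: V_def)
      then show "continuous_on (V \<times> cbox c x) (\<lambda>(\<tau>, r). dt (ds f) \<tau> r)" by (simp add: case_prod_beta)
    qed (use t0V cV in auto)
    then show ?thesis using at_within_open[OF t0V oV] by simp
  qed
  have D1: "dt f t0 x - dt f t0 c = integral {c..x} (dt (ds f) t0)" if "x \<in> {c..d}" for x
  proof -
    have "((\<lambda>\<tau>. f \<tau> x - f \<tau> c) has_vector_derivative dt f t0 x - dt f t0 c) (at t0)"
      by (intro derivative_intros smooth_dt_deriv[OF sm]) (use t0 in auto)
    then have "((\<lambda>\<tau>. integral {c..x} (ds f \<tau>)) has_vector_derivative dt f t0 x - dt f t0 c) (at t0)"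
      by (rule has_vector_derivative_transform_within_open[OF _ oV t0V]) (use FTC that in auto)
    then show ?thesis using LB[OF that] vector_derivative_unique_at by blast
  qed
  have cont: "continuous_on {c..d} (dt (ds f) t0)" by (rule smooth_cont_s[OF smdtds t0])
  have "((\<lambda>x. integral {c..x} (dt (ds f) t0)) has_vector_derivative dt (ds f) t0 s) (at s within {c..d})"
    by (rule integral_has_vector_derivative[OF cont]) (simp add: c_def d_def)
  then have IH: "((\<lambda>x. integral {c..x} (dt (ds f) t0)) has_vector_derivative dt (ds f) t0 s) (at s)"
    using at_within_Icc_at[of c s d] by (simp add: c_def d_def)
  have "((\<lambda>x. dt f t0 c + integral {c..x} (dt (ds f) t0)) has_vector_derivative dt (ds f) t0 s) (at s)"
    using has_vector_derivative_add[OF has_vector_derivative_const IH] by simp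
  then have A: "((\<lambda>x. dt f t0 x) has_vector_derivative dt (ds f) t0 s) (at s)"
    by (rule has_vector_derivative_transform_within_open[where S="{c<..<d}"]) (use D1 in \<open>auto simp: c_def d_def, metis add.commute diff_add_cancel less_eq_real_def\<close>)
  have B: "((\<lambda>x. dt f t0 x) has_vector_derivative ds (dt f) t0 s) (at s)"
    by (rule smooth_ds_deriv[OF smdt]) (use t0 in auto)
  show ?thesis using A B vector_derivative_unique_at by blast
qed

lemma ibp_per:
  fixes f :: "real \<Rightarrow> 'a::real_normed_vector" and g :: "real \<Rightarrow> 'b::real_normed_vector"
    and prod :: "'a \<Rightarrow> 'b \<Rightarrow> 'c::banach"
  assumes bl: "bounded_bilinear prod"
    and df: "\<And>x. (f has_vector_derivative f' x) (at x)"
    and dg: "\<And>x. (g has_vector_derivative g' x) (at x)"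
    and cf: "continuous_on {0..1} f'" and cg: "continuous_on {0..1} g'"
    and bd: "prod (f 1) (g 1) = prod (f 0) (g 0)"
  shows "integral {0..1} (\<lambda>x. prod (f' x) (g x)) = - integral {0..1} (\<lambda>x. prod (f x) (g' x))"
proof -
  interpret bounded_bilinear prod by fact
  have cf0: "continuous_on {0..1} f"
    by (rule continuous_at_imp_continuous_on) (use df has_vector_derivative_continuous in blast)
  have cg0: "continuous_on {0..1} g"
    by (rule continuous_at_imp_continuous_on) (use dg has_vector_derivative_continuous in blast)
  have "continuous_on {0..1} (\<lambda>x. prod (f x) (g' x))" by (rule continuous_on[OF cf0 cg])
  then have "(\<lambda>x. prod (f x) (g' x)) integrable_on {0..1}" by (rule integrable_continuous_interval)
  then have hi: "((\<lambda>x. prod (f x) (g' x)) has_integral integral {0..1} (\<lambda>x. prod (f x) (g' x))) {0..1}"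
    by (rule integrable_integral)
  have "((\<lambda>x. prod (f' x) (g x)) has_integral - integral {0..1} (\<lambda>x. prod (f x) (g' x))) {0..1}"
    by (rule integration_by_parts[OF bl _ cf0 cg0 df dg]) (use hi bd in auto)
  then show ?thesis by (rule integral_unique)
qed

lemma no_local_min_concave:
  fixes f f1 :: "real \<Rightarrow> real"
  assumes df: "\<And>x. DERIV f x :> f1 x" and d2: "DERIV f1 x0 :> c" and c: "c < 0"
    and d: "0 < d" and mn: "\<And>y. \<bar>x0 - y\<bar> < d \<Longrightarrow> f x0 \<le> f y"
  shows False
proof -
  have f10: "f1 x0 = 0" using DERIV_local_min[OF df d] mn by blast
  obtain e where e: "e > 0" "\<And>h. h > 0 \<Longrightarrow> h < e \<Longrightarrow> f1 x0 > f1 (x0 + h)"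
    using DERIV_neg_dec_right[OF d2 c] by blast
  define h where "h = min d e / 2"
  have h: "h > 0" "h < d" "h < e" using d e by (auto simp: h_def)
  obtain z where z: "x0 < z" "z < x0 + h" "f (x0 + h) - f x0 = (x0 + h - x0) * f1 z"
    using MVT2[of x0 "x0 + h" f f1] h df by auto
  have "f1 z < 0" using e(2)[of "z - x0"] z h f10 by auto
  then have "h * f1 z < 0" using h(1) by (simp add: mult_pos_neg)
  then have "f (x0 + h) < f x0" using z by simp
  moreover have "f x0 \<le> f (x0 + h)" using mn[of "x0 + h"] h by auto
  ultimately show False by simp
qed

lemma hvd_inner:
  fixes f g :: "real \<Rightarrow> 'a::real_inner"
  shows "(f has_vector_derivative f') (at x) \<Longrightarrow> (g has_vector_derivative g') (at x) \<Longrightarrow>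
    ((\<lambda>x. f x \<bullet> g x) has_vector_derivative (f x \<bullet> g' + f' \<bullet> g x)) (at x)"
  by (rule bounded_bilinear.has_vector_derivative[OF bounded_bilinear_inner])

lemma hvd_const_zero:
  fixes f :: "real \<Rightarrow> 'a::real_normed_vector"
  assumes "(f has_vector_derivative f') (at x)" "\<And>r. f r = c" shows "f' = 0"
proof -
  have "f = (\<lambda>r. c)" using assms(2) by auto
  then have "(f has_vector_derivative 0) (at x)" by (simp add: has_vector_derivative_const)
  then show ?thesis using assms(1) vector_derivative_unique_at by blast
qed

lemma per_step:
  fixes f :: "real \<Rightarrow> real \<Rightarrow> 'a::euclidean_space"
  assumes sm: "smooth_on2 ({a<..<b} \<times> UNIV) f" and t: "t \<in> {a<..<b}"
    and per: "\<And>s. f t (s + 1) = f t s"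
  shows "ds f t (s + 1) = ds f t s"
  by (rule periodic_deriv[of "f t"]) (use per smooth_ds_deriv[OF sm] t in auto)

locale flow =
  fixes T :: real and \<eta> :: "real \<Rightarrow> real \<Rightarrow> 'a::euclidean_space" and \<sigma> :: "real \<Rightarrow> real \<Rightarrow> real"
  assumes fl: "ucsf T \<eta> \<sigma>"
begin

abbreviation "V \<equiv> {0<..<T}"
abbreviation "L \<equiv> curve_length \<eta>"
abbreviation "u \<equiv> ds \<eta>"
abbreviation "u1 \<equiv> ds u"
abbreviation "u2 \<equiv> ds u1"
abbreviation "s1 \<equiv> ds \<sigma>"
abbreviation "s2 \<equiv> ds s1"
abbreviation "I t \<equiv> integral {0..1} (\<lambda>s. \<sigma> t s * (norm (ds (ds \<eta>) t s))^2)"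
definition "v t s = s2 t s *\<^sub>R u t s + (2 * s1 t s) *\<^sub>R u1 t s + \<sigma> t s *\<^sub>R u2 t s"

lemma smeta: "smooth_on2 (V \<times> UNIV) \<eta>" and smsig: "smooth_on2 (V \<times> UNIV) \<sigma>"
  and per_eta: "t \<in> V \<Longrightarrow> \<eta> t (s + 1) = \<eta> t s" and per_sig: "t \<in> V \<Longrightarrow> \<sigma> t (s + 1) = \<sigma> t s"
  and intsig: "t \<in> V \<Longrightarrow> integral {0..1} (\<sigma> t) = 1"
  and Lpos: "t \<in> V \<Longrightarrow> 0 < L t" and normu: "t \<in> V \<Longrightarrow> norm (u t s) = L t"
  and floweq: "t \<in> V \<Longrightarrow> dt \<eta> t s = (1 / (L t)^2) *\<^sub>R ds (\<lambda>t' s'. \<sigma> t' s' *\<^sub>R u t' s') t s"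
  and sigeq: "t \<in> V \<Longrightarrow> s2 t s - \<sigma> t s * (norm (u1 t s))^2 / (L t)^2 = - I t / (L t)^2"
  using fl unfolding ucsf_def by auto

lemma smu: "smooth_on2 (V \<times> UNIV) u" and smu1: "smooth_on2 (V \<times> UNIV) u1"
  and smu2: "smooth_on2 (V \<times> UNIV) u2" and sms1: "smooth_on2 (V \<times> UNIV) s1"
  and sms2: "smooth_on2 (V \<times> UNIV) s2"
  by (intro smooth_ds smeta smsig)+

lemma per_u: "t \<in> V \<Longrightarrow> u t (s + 1) = u t s"
  by (rule per_step[OF smeta]) (auto intro: per_eta)
lemma per_u1: "t \<in> V \<Longrightarrow> u1 t (s + 1) = u1 t s"
  by (rule per_step[OF smu]) (auto intro: per_u)
lemma per_u2: "t \<in> V \<Longrightarrow> u2 t (s + 1) = u2 t s"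
  by (rule per_step[OF smu1]) (auto intro: per_u1)
lemma per_s1: "t \<in> V \<Longrightarrow> s1 t (s + 1) = s1 t s"
  by (rule per_step[OF smsig]) (auto intro: per_sig)
lemma per_s2: "t \<in> V \<Longrightarrow> s2 t (s + 1) = s2 t s"
  by (rule per_step[OF sms1]) (auto intro: per_s1)

lemma dsig: "t \<in> V \<Longrightarrow> ((\<lambda>r. \<sigma> t r) has_real_derivative s1 t s) (at s)"
  using smooth_ds_deriv[OF smsig, of t s] by (simp add: has_real_derivative_iff_has_vector_derivative)
lemma ds1: "t \<in> V \<Longrightarrow> ((\<lambda>r. s1 t r) has_real_derivative s2 t s) (at s)"
  using smooth_ds_deriv[OF sms1, of t s] by (simp add: has_real_derivative_iff_has_vector_derivative)
lemma ds2: "t \<in> V \<Longrightarrow> ((\<lambda>r. s2 t r) has_real_derivative ds s2 t s) (at s)"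
  using smooth_ds_deriv[OF sms2, of t s] by (simp add: has_real_derivative_iff_has_vector_derivative)
lemma du: "t \<in> V \<Longrightarrow> ((\<lambda>r. u t r) has_vector_derivative u1 t s) (at s)"
  using smooth_ds_deriv[OF smu, of t s] by simp
lemma du1: "t \<in> V \<Longrightarrow> ((\<lambda>r. u1 t r) has_vector_derivative u2 t s) (at s)"
  using smooth_ds_deriv[OF smu1, of t s] by simp
lemma du2: "t \<in> V \<Longrightarrow> ((\<lambda>r. u2 t r) has_vector_derivative ds u2 t s) (at s)"
  using smooth_ds_deriv[OF smu2, of t s] by simp

lemma u_u1: assumes t: "t \<in> V" shows "u t s \<bullet> u1 t s = 0"
proof -
  have "((\<lambda>r. u t r \<bullet> u t r) has_vector_derivative (u t s \<bullet> u1 t s + u1 t s \<bullet> u t s)) (at s)"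
    by (intro hvd_inner du t)
  moreover have "u t r \<bullet> u t r = (L t)^2" for r using normu[OF t, of r] by (metis power2_norm_eq_inner)
  ultimately have "u t s \<bullet> u1 t s + u1 t s \<bullet> u t s = 0" by (rule hvd_const_zero)
  then show ?thesis by (simp add: inner_commute)
qed

lemma u_u2: assumes t: "t \<in> V" shows "u t s \<bullet> u2 t s = - (u1 t s \<bullet> u1 t s)"
proof -
  have "((\<lambda>r. u t r \<bullet> u1 t r) has_vector_derivative (u t s \<bullet> u2 t s + u1 t s \<bullet> u1 t s)) (at s)"
    by (intro hvd_inner du du1 t)
  moreover have "u t r \<bullet> u1 t r = 0" for r using u_u1[OF t] .
  ultimately have "u t s \<bullet> u2 t s + u1 t s \<bullet> u1 t s = 0" by (rule hvd_const_zero)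
  then show ?thesis by simp
qed

lemma uu: "t \<in> V \<Longrightarrow> u t s \<bullet> u t s = (L t)^2"
  using normu[of t s] by (metis power2_norm_eq_inner)

lemma dP: assumes t: "t \<in> V"
  shows "ds (\<lambda>t' s'. \<sigma> t' s' *\<^sub>R u t' s') t r = s1 t r *\<^sub>R u t r + \<sigma> t r *\<^sub>R u1 t r"
proof -
  have "((\<lambda>r. \<sigma> t r *\<^sub>R u t r) has_vector_derivative (\<sigma> t r *\<^sub>R u1 t r + s1 t r *\<^sub>R u t r)) (at r)"
    by (intro has_vector_derivative_scaleR dsig du t)
  then show ?thesis unfolding ds_def by (simp add: vector_derivative_at add.commute)
qed

lemma dP_deriv: assumes t: "t \<in> V"
  shows "((\<lambda>r. ds (\<lambda>t' s'. \<sigma> t' s' *\<^sub>R u t' s') t r) has_vector_derivative v t r) (at r)"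
proof -
  have "((\<lambda>r. s1 t r *\<^sub>R u t r + \<sigma> t r *\<^sub>R u1 t r) has_vector_derivative
     ((s1 t r *\<^sub>R u1 t r + s2 t r *\<^sub>R u t r) + (\<sigma> t r *\<^sub>R u2 t r + s1 t r *\<^sub>R u1 t r))) (at r)"
    by (intro has_vector_derivative_add has_vector_derivative_scaleR dsig ds1 du du1 t)
  moreover have "(\<lambda>r. ds (\<lambda>t' s'. \<sigma> t' s' *\<^sub>R u t' s') t r) = (\<lambda>r. s1 t r *\<^sub>R u t r + \<sigma> t r *\<^sub>R u1 t r)"
    using dP[OF t] by auto
  moreover have "(s1 t r *\<^sub>R u1 t r + s2 t r *\<^sub>R u t r) + (\<sigma> t r *\<^sub>R u2 t r + s1 t r *\<^sub>R u1 t r) = v t r"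
  proof -
    have e: "(2 * s1 t r) *\<^sub>R u1 t r = s1 t r *\<^sub>R u1 t r + s1 t r *\<^sub>R u1 t r"
      by (metis mult_2 scaleR_add_left)
    show ?thesis unfolding v_def e by (simp add: add_ac)
  qed
  ultimately show ?thesis by simp
qed

lemma dt_u: assumes t: "t \<in> V" shows "dt u t s = (1 / (L t)^2) *\<^sub>R v t s"
proof -
  have "dt u t s = ds (dt \<eta>) t s" by (rule swap_partials[OF smeta t])
  also have "\<dots> = vector_derivative (\<lambda>r. (1 / (L t)^2) *\<^sub>R ds (\<lambda>t' s'. \<sigma> t' s' *\<^sub>R u t' s') t r) (at s)"
  proof -
    have "dt \<eta> t = (\<lambda>r. (1 / (L t)^2) *\<^sub>R ds (\<lambda>t' s'. \<sigma> t' s' *\<^sub>R u t' s') t r)"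
      using floweq[OF t] by auto
    then show ?thesis unfolding ds_def[of "dt \<eta>"] by simp
  qed
  also have "\<dots> = (1 / (L t)^2) *\<^sub>R v t s"
    by (rule vector_derivative_at) (rule bounded_linear.has_vector_derivative[OF bounded_linear_scaleR_right], intro dP_deriv t)
  finally show ?thesis .
qed

end

context flow begin

lemma u_v: assumes t: "t \<in> V" shows "u t s \<bullet> v t s = - I t"
proof -
  have "u t s \<bullet> v t s = s2 t s * (L t)^2 - \<sigma> t s * (u1 t s \<bullet> u1 t s)"
    unfolding v_def using uu[OF t] u_u1[OF t] u_u2[OF t] by (simp add: inner_add_right)
  also have "\<dots> = - I t"
  proof -
    have L0: "(L t)^2 \<noteq> 0" using Lpos[OF t] by simp
    have "s2 t s - \<sigma> t s * (u1 t s \<bullet> u1 t s) / (L t)^2 = - I t / (L t)^2"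
      using sigeq[OF t, of s] by (simp add: power2_norm_eq_inner)
    then have "(s2 t s - \<sigma> t s * (u1 t s \<bullet> u1 t s) / (L t)^2) * (L t)^2 = (- I t / (L t)^2) * (L t)^2"
      by simp
    then show ?thesis using L0 by (simp add: field_simps)
  qed
  finally show ?thesis .
qed

lemma L_eq: "t \<in> V \<Longrightarrow> L t = norm (u t 0)"
  using normu by simp

lemma partI: assumes t: "t \<in> V" shows "(L has_real_derivative (- I t / (L t)^3)) (at t)"
proof -
  define W where "W = dt u t 0"
  have dU: "((\<lambda>\<tau>. u \<tau> 0) has_vector_derivative W) (at t)"
    unfolding W_def by (rule smooth_dt_deriv[OF smu]) (use t in auto)
  have nz: "u t 0 \<noteq> 0" using normu[OF t, of 0] Lpos[OF t] by auto
  have "((\<lambda>\<tau>. norm (u \<tau> 0)) has_derivative (\<lambda>h. (h *\<^sub>R W) \<bullet> sgn (u t 0))) (at t)"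
    by (rule has_derivative_compose[OF dU[unfolded has_vector_derivative_def] has_derivative_norm[OF nz]])
  moreover have "(\<lambda>h. (h *\<^sub>R W) \<bullet> sgn (u t 0)) = (*) (W \<bullet> sgn (u t 0))"
    by (auto simp: fun_eq_iff)
  ultimately have "((\<lambda>\<tau>. norm (u \<tau> 0)) has_real_derivative (W \<bullet> sgn (u t 0))) (at t)"
    by (simp add: has_field_derivative_def)
  moreover have "W \<bullet> sgn (u t 0) = - I t / (L t)^3"
  proof -
    have "W \<bullet> sgn (u t 0) = (1 / (L t)^2) * (v t 0 \<bullet> u t 0) / L t"
      unfolding W_def dt_u[OF t] sgn_div_norm normu[OF t] by (simp add: inner_commute divide_inverse)
    also have "\<dots> = - I t / (L t)^3" using u_v[OF t, of 0] by (simp add: inner_commute power_def)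
    finally show ?thesis .
  qed
  ultimately have "((\<lambda>\<tau>. norm (u \<tau> 0)) has_real_derivative (- I t / (L t)^3)) (at t)" by simp
  then show ?thesis
    by (rule has_field_derivative_transform_within_open[where S=V]) (use t L_eq in auto)
qed

end

lemma cint: fixes f :: "real \<Rightarrow> 'b::banach" shows "continuous_on {0..1::real} f \<Longrightarrow> f integrable_on {0..1}"
  by (rule integrable_continuous_interval)

context flow begin

abbreviation "\<kappa> t s \<equiv> (norm (u1 t s))^2"

lemma cs_sig: "t \<in> V \<Longrightarrow> continuous_on S (\<lambda>s. \<sigma> t s)"
  using smooth_cont_s[OF smsig, of t] by simp
lemma cs_s1: "t \<in> V \<Longrightarrow> continuous_on S (\<lambda>s. s1 t s)"
  using smooth_cont_s[OF sms1, of t] by simp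
lemma cs_s2: "t \<in> V \<Longrightarrow> continuous_on S (\<lambda>s. s2 t s)"
  using smooth_cont_s[OF sms2, of t] by simp
lemma cs_u: "t \<in> V \<Longrightarrow> continuous_on S (\<lambda>s. u t s)"
  using smooth_cont_s[OF smu, of t] by simp
lemma cs_u1: "t \<in> V \<Longrightarrow> continuous_on S (\<lambda>s. u1 t s)"
  using smooth_cont_s[OF smu1, of t] by simp
lemma cs_u2: "t \<in> V \<Longrightarrow> continuous_on S (\<lambda>s. u2 t s)"
  using smooth_cont_s[OF smu2, of t] by simp

lemma sig_pt: assumes t: "t \<in> V"
  shows "(L t)^2 * s2 t s = \<sigma> t s * \<kappa> t s - I t"
proof -
  have L0: "(L t)^2 \<noteq> 0" using Lpos[OF t] by simp
  have "(s2 t s - \<sigma> t s * \<kappa> t s / (L t)^2) * (L t)^2 = (- I t / (L t)^2) * (L t)^2"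
    using sigeq[OF t, of s] by simp
  then show ?thesis using L0 by (simp add: field_simps)
qed

lemma keyIBP:
  assumes t: "t \<in> V" and dh: "\<And>x. (h has_real_derivative h' x) (at x)"
    and ch: "continuous_on {0..1} h'" and ph: "h 1 = h 0"
  shows "integral {0..1} (\<lambda>s. (L t)^2 * (s1 t s * h' s)) = integral {0..1} (\<lambda>s. (I t - \<sigma> t s * \<kappa> t s) * h s)"
proof -
  have ibp: "integral {0..1} (\<lambda>s. s2 t s * h s) = - integral {0..1} (\<lambda>s. s1 t s * h' s)"
  proof (rule ibp_per[OF bounded_bilinear_mult])
    show "((\<lambda>r. s1 t r) has_vector_derivative s2 t x) (at x)" for x
      using ds1[OF t] by (simp add: has_real_derivative_iff_has_vector_derivative)
    show "(h has_vector_derivative h' x) (at x)" for x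
      using dh by (simp add: has_real_derivative_iff_has_vector_derivative)
    show "continuous_on {0..1} (s2 t)" using cs_s2[OF t] by simp
    show "s1 t 1 * h 1 = s1 t 0 * h 0" using per_s1[OF t, of 0] ph by simp
  qed (rule ch)
  have "integral {0..1} (\<lambda>s. (I t - \<sigma> t s * \<kappa> t s) * h s) = integral {0..1} (\<lambda>s. - ((L t)^2 * (s2 t s * h s)))"
  proof (rule integral_cong)
    fix x
    have "(L t)^2 * (s2 t x * h x) = ((L t)^2 * s2 t x) * h x" by simp
    also have "\<dots> = (\<sigma> t x * \<kappa> t x - I t) * h x" by (simp only: sig_pt[OF t])
    finally show "(I t - \<sigma> t x * \<kappa> t x) * h x = - ((L t)^2 * (s2 t x * h x))" by (simp add: algebra_simps)
  qed
  also have "\<dots> = (L t)^2 * integral {0..1} (\<lambda>s. s1 t s * h' s)" using ibp by simp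
  also have "\<dots> = integral {0..1} (\<lambda>s. (L t)^2 * (s1 t s * h' s))" by simp
  finally show ?thesis by simp
qed

lemma energy: assumes t: "t \<in> V"
  shows "I t = (L t)^2 * integral {0..1} (\<lambda>s. (s1 t s)^2) + integral {0..1} (\<lambda>s. \<kappa> t s * (\<sigma> t s)^2)"
proof -
  note [continuous_intros] = cs_sig[OF t] cs_s1[OF t] cs_u1[OF t]
  have k: "integral {0..1} (\<lambda>s. (L t)^2 * (s1 t s * s1 t s)) = integral {0..1} (\<lambda>s. (I t - \<sigma> t s * \<kappa> t s) * \<sigma> t s)"
    by (rule keyIBP[OF t]) (use dsig[OF t] per_sig[OF t, of 0] in \<open>auto intro!: continuous_intros\<close>)
  have "integral {0..1} (\<lambda>s. (I t - \<sigma> t s * \<kappa> t s) * \<sigma> t s)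
        = integral {0..1} (\<lambda>s. I t * \<sigma> t s - \<kappa> t s * (\<sigma> t s)^2)"
    by (rule integral_cong) (simp add: algebra_simps power2_eq_square)
  also have "\<dots> = I t * integral {0..1} (\<sigma> t) - integral {0..1} (\<lambda>s. \<kappa> t s * (\<sigma> t s)^2)"
    by (subst integral_diff) (auto intro!: cint continuous_intros)
  also have "\<dots> = I t - integral {0..1} (\<lambda>s. \<kappa> t s * (\<sigma> t s)^2)" using intsig[OF t] by simp
  finally have "(L t)^2 * integral {0..1} (\<lambda>s. s1 t s * s1 t s) = I t - integral {0..1} (\<lambda>s. \<kappa> t s * (\<sigma> t s)^2)"
    using k by simp
  then show ?thesis by (simp add: power2_eq_square)
qed

lemma I_nonneg: assumes t: "t \<in> V" shows "0 \<le> I t"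
proof -
  note [continuous_intros] = cs_sig[OF t] cs_s1[OF t] cs_u1[OF t]
  have "0 \<le> integral {0..1} (\<lambda>s. (s1 t s)^2)"
    by (rule integral_nonneg) (auto intro!: cint continuous_intros)
  moreover have "0 \<le> integral {0..1} (\<lambda>s. \<kappa> t s * (\<sigma> t s)^2)"
    by (rule integral_nonneg) (auto intro!: cint continuous_intros)
  ultimately show ?thesis using energy[OF t] by simp
qed

end

context flow begin

lemma sig_nonneg: assumes t: "t \<in> V" and x: "x \<in> {0..1}" shows "0 \<le> \<sigma> t x"
proof (cases "I t = 0")
  case True
  note [continuous_intros] = cs_sig[OF t] cs_s1[OF t] cs_u1[OF t]
  have a: "0 \<le> integral {0..1} (\<lambda>s. (s1 t s)^2)"
    by (rule integral_nonneg) (auto intro!: cint continuous_intros)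
  have b: "0 \<le> integral {0..1} (\<lambda>s. \<kappa> t s * (\<sigma> t s)^2)"
    by (rule integral_nonneg) (auto intro!: cint continuous_intros)
  have Lp: "0 < (L t)^2" using Lpos[OF t] by simp
  have "(L t)^2 * integral {0..1} (\<lambda>s. (s1 t s)^2) = 0"
    using energy[OF t] True a b Lp by (smt (verit) mult_nonneg_nonneg)
  then have z: "integral {0..1} (\<lambda>s. (s1 t s)^2) = 0" using Lp by simp
  have s10: "s1 t y = 0" if y: "y \<in> {0..1}" for y
  proof -
    have "((\<lambda>s. (s1 t s)^2) has_integral 0) (cbox 0 1)"
      using z integrable_integral[OF cint[of "\<lambda>s. (s1 t s)^2"]]
      by (auto intro!: continuous_intros)
    then have "(\<lambda>s. (s1 t s)^2) y = 0"
      by (intro has_integral_0_cbox_imp_0[of 0 1]) (use y in \<open>auto intro!: continuous_intros\<close>)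
    then show ?thesis by simp
  qed
  have "\<exists>c. \<forall>y\<in>{0..1}. \<sigma> t y = (c::real)"
  proof (rule has_field_derivative_zero_constant)
    fix y assume "y \<in> {0..1::real}"
    then show "((\<lambda>r. \<sigma> t r) has_field_derivative 0) (at y within {0..1})"
      using dsig[OF t, of y] s10 by (metis has_field_derivative_at_within)
  qed simp
  then obtain c where c: "\<And>y. y \<in> {0..1} \<Longrightarrow> \<sigma> t y = c" by blast
  have "integral {0..1} (\<sigma> t) = integral {0..1} (\<lambda>y::real. c)" using c by (intro Henstock_Kurzweil_Integration.integral_cong) auto
  then have "c = 1" using intsig[OF t] by simp
  then show ?thesis using c x by simp
next
  case False
  then have Ipos: "0 < I t" using I_nonneg[OF t] by simp
  show ?thesis
  proof (rule ccontr)
    assume neg: "\<not> 0 \<le> \<sigma> t x"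
    obtain x0 where x0: "x0 \<in> {0..1}" "\<And>y. y \<in> {0..1} \<Longrightarrow> \<sigma> t x0 \<le> \<sigma> t y"
      using continuous_attains_inf[of "{0..1::real}" "\<sigma> t"] cs_sig[OF t] by auto
    define x1 where "x1 = (if 0 < x0 \<and> x0 < 1 then x0 else 1)"
    define d where "d = (if 0 < x0 \<and> x0 < 1 then min x0 (1 - x0) else 1)"
    have d: "0 < d" using x0 by (auto simp: d_def)
    have per1: "\<sigma> t 1 = \<sigma> t 0" using per_sig[OF t, of 0] by simp
    have sx1: "\<sigma> t x1 = \<sigma> t x0"
      using x0(1) per1 by (auto simp: x1_def)
    have mn: "\<sigma> t x1 \<le> \<sigma> t y" if "\<bar>x1 - y\<bar> < d" for y
    proof (cases "0 < x0 \<and> x0 < 1")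
      case True
      then have "y \<in> {0..1}" using that by (auto simp: x1_def d_def)
      then show ?thesis using x0 sx1 by simp
    next
      case False
      then have y: "0 < y" "y < 2" using that by (auto simp: x1_def d_def)
      show ?thesis
      proof (cases "y \<le> 1")
        case True then show ?thesis using x0 sx1 y by simp
      next
        case False
        have "\<sigma> t y = \<sigma> t (y - 1)" using per_sig[OF t, of "y - 1"] by simp
        also have "\<sigma> t x0 \<le> \<dots>" using x0(2)[of "y - 1"] False y by simp
        finally show ?thesis using sx1 by simp
      qed
    qed
    have neg1: "\<sigma> t x1 < 0" using sx1 x0 x neg by fastforce
    have "(L t)^2 * s2 t x1 = \<sigma> t x1 * \<kappa> t x1 - I t" by (rule sig_pt[OF t])
    moreover have "\<sigma> t x1 * \<kappa> t x1 \<le> 0" using neg1 by (simp add: mult_nonpos_nonneg)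
    ultimately have "(L t)^2 * s2 t x1 < 0" using Ipos by simp
    then have s2n: "s2 t x1 < 0" using Lpos[OF t] by (simp add: mult_less_0_iff)
    show False
      by (rule no_local_min_concave[of "\<sigma> t" "s1 t" "s2 t x1" x1 d])
         (use dsig[OF t] ds1[OF t] s2n d mn in auto)
  qed
qed

end

context flow begin

definition "Aco t0 = integral {0..1} (\<lambda>s. (s1 t0 s)^2)"
definition "G t0 \<tau> = integral {0..1} (\<lambda>s. \<kappa> \<tau> s * (\<sigma> t0 s)^2)"

lemma minimality: assumes t0: "t0 \<in> V" and t: "t \<in> V"
  shows "I t \<le> (L t)^2 * Aco t0 + G t0 t"
proof -
  note [continuous_intros] = cs_sig[OF t] cs_s1[OF t] cs_u1[OF t] cs_sig[OF t0] cs_s1[OF t0]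
  define h where "h s = 2 * \<sigma> t0 s - \<sigma> t s" for s
  define h' where "h' s = 2 * s1 t0 s - s1 t s" for s
  have dh: "(h has_real_derivative h' x) (at x)" for x
  proof -
    have a: "((\<lambda>s. 2 * \<sigma> t0 s) has_real_derivative 2 * s1 t0 x) (at x)"
      by (rule DERIV_cmult) (rule dsig[OF t0])
    show ?thesis unfolding h_def h'_def by (rule DERIV_diff[OF a dsig[OF t]])
  qed
  have k: "integral {0..1} (\<lambda>s. (L t)^2 * (s1 t s * h' s)) = integral {0..1} (\<lambda>s. (I t - \<sigma> t s * \<kappa> t s) * h s)"
    by (rule keyIBP[OF t dh]) (auto simp: h_def h'_def per_sig[OF t, of 0, simplified] per_sig[OF t0, of 0, simplified] intro!: continuous_intros)
  define Q where "Q = integral {0..1} (\<lambda>s. (L t)^2 * (s1 t0 s - s1 t s)^2 + \<kappa> t s * (\<sigma> t0 s - \<sigma> t s)^2)"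
  have Q: "0 \<le> Q" unfolding Q_def
    by (rule integral_nonneg) (auto intro!: cint continuous_intros)
  have "(L t)^2 * Aco t0 + G t0 t = integral {0..1} (\<lambda>s. (L t)^2 * (s1 t0 s)^2 + \<kappa> t s * (\<sigma> t0 s)^2)"
    unfolding Aco_def G_def by (subst integral_add) (auto intro!: cint continuous_intros)
  also have "\<dots> = integral {0..1} (\<lambda>s. ((L t)^2 * (s1 t0 s - s1 t s)^2 + \<kappa> t s * (\<sigma> t0 s - \<sigma> t s)^2)
       + ((L t)^2 * (s1 t s * h' s) + \<kappa> t s * \<sigma> t s * h s))"
    by (rule integral_cong) (simp add: h_def h'_def power2_eq_square algebra_simps)
  also have "\<dots> = Q + (integral {0..1} (\<lambda>s. (L t)^2 * (s1 t s * h' s)) + integral {0..1} (\<lambda>s. \<kappa> t s * \<sigma> t s * h s))"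
    unfolding Q_def h_def h'_def by (subst integral_add, (auto intro!: cint continuous_intros)[2])+ simp
  also have "\<dots> = Q + integral {0..1} (\<lambda>s. (I t - \<sigma> t s * \<kappa> t s) * h s + \<kappa> t s * \<sigma> t s * h s)"
    unfolding k h_def by (subst integral_add) (auto intro!: cint continuous_intros)
  also have "\<dots> = Q + integral {0..1} (\<lambda>s. I t * h s)"
    by (rule arg_cong[where f="\<lambda>x. Q + x"], rule integral_cong) (simp add: algebra_simps)
  also have "\<dots> = Q + I t * (2 * integral {0..1} (\<sigma> t0) - integral {0..1} (\<sigma> t))"
  proof -
    have hd: "integral {0..1} (\<lambda>s. 2 * \<sigma> t0 s - \<sigma> t s) = 2 * integral {0..1} (\<sigma> t0) - integral {0..1} (\<sigma> t)"
      by (subst integral_diff) (auto intro!: cint continuous_intros)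
    show ?thesis unfolding h_def using hd by simp
  qed
  also have "\<dots> = Q + I t" using intsig[OF t] intsig[OF t0] by simp
  finally show ?thesis using Q by simp
qed

lemma dkappa: assumes t: "t \<in> V"
  shows "((\<lambda>r. \<kappa> r s) has_real_derivative (u1 t s \<bullet> dt u1 t s + dt u1 t s \<bullet> u1 t s)) (at t)"
proof -
  have "((\<lambda>r. u1 r s \<bullet> u1 r s) has_vector_derivative (u1 t s \<bullet> dt u1 t s + dt u1 t s \<bullet> u1 t s)) (at t)"
    by (intro hvd_inner smooth_dt_deriv[OF smu1]) (use t in auto)
  then show ?thesis by (simp add: has_real_derivative_iff_has_vector_derivative power2_norm_eq_inner)
qed

lemma dsig_t: assumes t: "t \<in> V" shows "((\<lambda>r. \<sigma> r s) has_real_derivative dt \<sigma> t s) (at t)"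
  using smooth_dt_deriv[OF smsig, of t s] t by (simp add: has_real_derivative_iff_has_vector_derivative)

lemma cUsig: "continuous_on S (\<lambda>p. \<sigma> (fst p) (snd p))" if "S \<subseteq> V \<times> UNIV"
  using continuous_on_subset[OF smooth_cont[OF smsig] that] .
lemma cUdsig: "continuous_on S (\<lambda>p. dt \<sigma> (fst p) (snd p))" if "S \<subseteq> V \<times> UNIV"
  using continuous_on_subset[OF smooth_cont[OF smooth_dt[OF smsig]] that] .
lemma cUu1: "continuous_on S (\<lambda>p. u1 (fst p) (snd p))" if "S \<subseteq> V \<times> UNIV"
  using continuous_on_subset[OF smooth_cont[OF smu1] that] .
lemma cUdu1: "continuous_on S (\<lambda>p. dt u1 (fst p) (snd p))" if "S \<subseteq> V \<times> UNIV"
  using continuous_on_subset[OF smooth_cont[OF smooth_dt[OF smu1]] that] .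

lemma I_deriv: assumes t0: "t0 \<in> V" shows "\<exists>Ip. ((\<lambda>\<tau>. I \<tau>) has_real_derivative Ip) (at t0)"
proof -
  have sub: "V \<times> cbox 0 1 \<subseteq> V \<times> UNIV" by auto
  have "((\<lambda>\<tau>. integral (cbox 0 1) (\<lambda>s. \<sigma> \<tau> s * \<kappa> \<tau> s)) has_field_derivative
     integral (cbox 0 1) (\<lambda>s. dt \<sigma> t0 s * \<kappa> t0 s + \<sigma> t0 s * (u1 t0 s \<bullet> dt u1 t0 s + dt u1 t0 s \<bullet> u1 t0 s))) (at t0 within V)"
  proof (rule leibniz_rule_field_derivative)
    fix x s assume x: "x \<in> V"
    show "((\<lambda>\<tau>. \<sigma> \<tau> s * \<kappa> \<tau> s) has_field_derivative
        dt \<sigma> x s * \<kappa> x s + \<sigma> x s * (u1 x s \<bullet> dt u1 x s + dt u1 x s \<bullet> u1 x s)) (at x within V)"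
      by (rule has_field_derivative_at_within, rule DERIV_cong[OF DERIV_mult'[OF dsig_t[OF x, of s] dkappa[OF x, of s]]])
         (simp add: algebra_simps)
  next
    fix x assume x: "x \<in> V"
    note [continuous_intros] = cs_sig[OF x] cs_u1[OF x]
    show "(\<lambda>s. \<sigma> x s * \<kappa> x s) integrable_on cbox 0 1"
      unfolding cbox_interval by (auto intro!: cint continuous_intros)
  next
    note [continuous_intros] = cUsig[OF sub] cUdsig[OF sub] cUu1[OF sub] cUdu1[OF sub]
    show "continuous_on (V \<times> cbox 0 1) (\<lambda>(x, s). dt \<sigma> x s * \<kappa> x s + \<sigma> x s * (u1 x s \<bullet> dt u1 x s + dt u1 x s \<bullet> u1 x s))"
      unfolding case_prod_beta by (intro continuous_intros)
  qed (use t0 in auto)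
  then show ?thesis using at_within_open[OF t0] unfolding cbox_interval by auto
qed

lemma G_deriv: assumes t0: "t0 \<in> V"
  shows "((\<lambda>\<tau>. G t0 \<tau>) has_real_derivative
     integral {0..1} (\<lambda>s. (u1 t0 s \<bullet> dt u1 t0 s + dt u1 t0 s \<bullet> u1 t0 s) * (\<sigma> t0 s)^2)) (at t0)"
proof -
  have sub: "V \<times> cbox 0 1 \<subseteq> V \<times> UNIV" by auto
  have cs: "continuous_on (V \<times> cbox 0 1) (\<lambda>p. \<sigma> t0 (snd p))"
    by (rule continuous_on_compose2[OF cs_sig[OF t0, of UNIV]]) (auto intro: continuous_intros)
  have "((\<lambda>\<tau>. integral (cbox 0 1) (\<lambda>s. \<kappa> \<tau> s * (\<sigma> t0 s)^2)) has_field_derivative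
     integral (cbox 0 1) (\<lambda>s. (u1 t0 s \<bullet> dt u1 t0 s + dt u1 t0 s \<bullet> u1 t0 s) * (\<sigma> t0 s)^2)) (at t0 within V)"
  proof (rule leibniz_rule_field_derivative[where f="\<lambda>\<tau> s. \<kappa> \<tau> s * (\<sigma> t0 s)^2" and fx="\<lambda>x s. (u1 x s \<bullet> dt u1 x s + dt u1 x s \<bullet> u1 x s) * (\<sigma> t0 s)^2"])
    fix x s assume x: "x \<in> V"
    show "((\<lambda>\<tau>. \<kappa> \<tau> s * (\<sigma> t0 s)^2) has_field_derivative
        (u1 x s \<bullet> dt u1 x s + dt u1 x s \<bullet> u1 x s) * (\<sigma> t0 s)^2) (at x within V)"
      by (rule has_field_derivative_at_within, rule DERIV_cong[OF DERIV_mult'[OF dkappa[OF x, of s] DERIV_const]])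
         (simp add: algebra_simps)
  next
    fix x assume x: "x \<in> V"
    note [continuous_intros] = cs_sig[OF t0] cs_u1[OF x]
    show "(\<lambda>s. \<kappa> x s * (\<sigma> t0 s)^2) integrable_on cbox 0 1"
      unfolding cbox_interval by (auto intro!: cint continuous_intros)
  next
    note [continuous_intros] = cUu1[OF sub] cUdu1[OF sub] cs
    show "continuous_on (V \<times> cbox 0 1) (\<lambda>(x, s). (u1 x s \<bullet> dt u1 x s + dt u1 x s \<bullet> u1 x s) * (\<sigma> t0 s)^2)"
      unfolding case_prod_beta by (intro continuous_intros)
  qed (use t0 in auto)
  then show ?thesis using at_within_open[OF t0] unfolding cbox_interval G_def by auto
qed

end

lemma alg_ident:
  fixes u u1 u2 :: "'a::real_inner"
  assumes h1: "u \<bullet> u = Lsq" and h2: "u \<bullet> u1 = 0" and h3: "u \<bullet> u2 = - (u1 \<bullet> u1)"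
  shows "- Lsq * (((\<sigma>^2) *\<^sub>R u2 + (2 * \<sigma> * a) *\<^sub>R u1) \<bullet> (b *\<^sub>R u + (2 * a) *\<^sub>R u1 + \<sigma> *\<^sub>R u2))
     + (\<sigma> * (u1 \<bullet> u1) - Lsq * b) * (u1 \<bullet> u1) * \<sigma>^2
   = \<sigma> * ((u \<bullet> (\<sigma> *\<^sub>R u2 + (2 * a) *\<^sub>R u1))^2
        - Lsq * ((\<sigma> *\<^sub>R u2 + (2 * a) *\<^sub>R u1) \<bullet> (\<sigma> *\<^sub>R u2 + (2 * a) *\<^sub>R u1)))"
proof -
  have h2': "u1 \<bullet> u = 0" using h2 by (simp add: inner_commute)
  have h3': "u2 \<bullet> u = - (u1 \<bullet> u1)" using h3 by (simp add: inner_commute)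
  have c: "u2 \<bullet> u1 = u1 \<bullet> u2" by (simp add: inner_commute)
  show ?thesis
    by (simp add: inner_add_left inner_add_right h1 h2 h3 h2' h3' c power2_eq_square algebra_simps)
qed

lemma aux_neg: "(X::real) \<le> 0 \<Longrightarrow> 0 \<le> -2 * X" by simp

lemma final_alg:
  fixes L I A B Gp Ip Lsqp :: real
  assumes L: "L > 0" and e1: "I = L^2 * A + B" and e2: "Lsqp = -2 * I / L^2"
    and e3: "Ip = Lsqp * A + Gp" and e4: "Gp * L^4 + 2 * I * B \<le> 0"
  shows "0 \<le> (-2 * Ip * L^2 - (-2 * I) * Lsqp) / (L^2 * L^2)"
proof -
  have L2: "L^2 > 0" using L by simp
  have k: "Lsqp * L^2 = -2 * I" unfolding e2 using L2 by simp
  have "(-2 * Ip * L^2 - (-2 * I) * Lsqp) * L^2 = -2 * A * (Lsqp * L^2) * L^2 - 2 * Gp * L^4 + 2 * I * (Lsqp * L^2)"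
    unfolding e3 power4_eq_xxxx power2_eq_square by algebra
  also have "\<dots> = 4 * A * I * L^2 - 2 * Gp * L^4 - 4 * I * I" unfolding k by simp
  also have "\<dots> = -2 * (Gp * L^4 + 2 * I * B)" unfolding e1 power4_eq_xxxx power2_eq_square by algebra
  finally have eq: "(-2 * Ip * L^2 - (-2 * I) * Lsqp) * L^2 = -2 * (Gp * L^4 + 2 * I * B)" .
  have "(-2 * Ip * L^2 - (-2 * I) * Lsqp) * L^2 \<ge> 0" unfolding eq
    using e4 by (rule aux_neg)
  then have "-2 * Ip * L^2 - (-2 * I) * Lsqp \<ge> 0" using L2 by (metis mult_neg_pos not_le)
  then show ?thesis using L2 by (intro divide_nonneg_pos) auto
qed


context flow begin

lemma per_v: "t \<in> V \<Longrightarrow> v t (s + 1) = v t s"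
  unfolding v_def by (simp add: per_s2 per_u per_s1 per_u1 per_sig per_u2)

lemma per_dtu: "t \<in> V \<Longrightarrow> dt u t (s + 1) = dt u t s"
  by (simp add: dt_u per_v)

lemma Gp_ineq: assumes t0: "t0 \<in> V"
  shows "integral {0..1} (\<lambda>s. (u1 t0 s \<bullet> dt u1 t0 s + dt u1 t0 s \<bullet> u1 t0 s) * (\<sigma> t0 s)^2) * (L t0)^4
     + 2 * I t0 * G t0 t0 \<le> 0"
proof -
  note [continuous_intros] = cs_sig[OF t0] cs_s1[OF t0] cs_s2[OF t0] cs_u[OF t0] cs_u1[OF t0] cs_u2[OF t0]
  define f where "f r = (\<sigma> t0 r)^2 *\<^sub>R u1 t0 r" for r
  define f' where "f' r = (\<sigma> t0 r)^2 *\<^sub>R u2 t0 r + (2 * \<sigma> t0 r * s1 t0 r) *\<^sub>R u1 t0 r" for r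
  define g where "g r = dt u t0 r" for r
  define g' where "g' r = ds (dt u) t0 r" for r
  define c where "c = 1 / (L t0)^2"
  have Lp: "0 < L t0" using Lpos[OF t0] .
  have df: "(f has_vector_derivative f' x) (at x)" for x
  proof -
    have d2: "((\<lambda>r. (\<sigma> t0 r)^2) has_real_derivative 2 * \<sigma> t0 x * s1 t0 x) (at x)"
      by (rule DERIV_cong[OF DERIV_power[OF dsig[OF t0, of x], of 2]]) simp
    show ?thesis unfolding f_def f'_def
      by (rule has_vector_derivative_scaleR[OF d2 du1[OF t0]])
  qed
  have dg: "(g has_vector_derivative g' x) (at x)" for x
    unfolding g_def g'_def by (rule smooth_ds_deriv[OF smooth_dt[OF smu]]) (use t0 in auto)
  have cg': "continuous_on {0..1} g'"
    unfolding g'_def by (rule smooth_cont_s[OF smooth_ds[OF smooth_dt[OF smu]] t0])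
  have cf': "continuous_on {0..1} f'" unfolding f'_def by (intro continuous_intros)
  have bd: "f 1 \<bullet> g 1 = f 0 \<bullet> g 0"
    unfolding f_def g_def using per_sig[OF t0, of 0] per_u1[OF t0, of 0] per_dtu[OF t0, of 0] by simp
  have ibp: "integral {0..1} (\<lambda>x. f' x \<bullet> g x) = - integral {0..1} (\<lambda>x. f x \<bullet> g' x)"
    by (rule ibp_per[OF bounded_bilinear_inner df dg cf' cg' bd])
  have gv: "g x = c *\<^sub>R v t0 x" for x unfolding g_def c_def by (rule dt_u[OF t0])
  have cv: "continuous_on {0..1} (v t0)" unfolding v_def[abs_def] by (intro continuous_intros)
  note [continuous_intros] = continuous_on_compose2[OF cv, of _ "\<lambda>x. x", simplified]
  have Gp: "integral {0..1} (\<lambda>s. (u1 t0 s \<bullet> dt u1 t0 s + dt u1 t0 s \<bullet> u1 t0 s) * (\<sigma> t0 s)^2)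
      = -2 * c * integral {0..1} (\<lambda>x. f' x \<bullet> v t0 x)"
  proof -
    have "integral {0..1} (\<lambda>s. (u1 t0 s \<bullet> dt u1 t0 s + dt u1 t0 s \<bullet> u1 t0 s) * (\<sigma> t0 s)^2)
        = integral {0..1} (\<lambda>s. 2 * (f s \<bullet> g' s))"
      by (rule integral_cong) (simp add: f_def g'_def swap_partials[OF smu t0] inner_commute algebra_simps)
    also have "\<dots> = 2 * (- integral {0..1} (\<lambda>x. f' x \<bullet> g x))" using ibp by simp
    also have "integral {0..1} (\<lambda>x. f' x \<bullet> g x) = c * integral {0..1} (\<lambda>x. f' x \<bullet> v t0 x)"
      unfolding gv by simp
    finally show ?thesis by simp
  qed
  have cL: "c * (L t0)^4 = (L t0)^2" unfolding c_def using Lp by (simp add: power4_eq_xxxx power2_eq_square)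
  have "integral {0..1} (\<lambda>s. (u1 t0 s \<bullet> dt u1 t0 s + dt u1 t0 s \<bullet> u1 t0 s) * (\<sigma> t0 s)^2) * (L t0)^4
     + 2 * I t0 * G t0 t0
     = integral {0..1} (\<lambda>x. -2 * (L t0)^2 * (f' x \<bullet> v t0 x) + 2 * I t0 * (\<kappa> t0 x * (\<sigma> t0 x)^2))"
  proof -
    have "integral {0..1} (\<lambda>x. -2 * (L t0)^2 * (f' x \<bullet> v t0 x) + 2 * I t0 * (\<kappa> t0 x * (\<sigma> t0 x)^2))
       = -2 * (L t0)^2 * integral {0..1} (\<lambda>x. f' x \<bullet> v t0 x) + 2 * I t0 * G t0 t0"
      unfolding G_def f'_def by (subst integral_add) (auto intro!: cint continuous_intros)
    also have "-2 * (L t0)^2 * integral {0..1} (\<lambda>x. f' x \<bullet> v t0 x)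
        = (-2 * c * integral {0..1} (\<lambda>x. f' x \<bullet> v t0 x)) * (L t0)^4"
      using cL by (simp add: algebra_simps)
    finally show ?thesis unfolding Gp by simp
  qed
  also have "\<dots> = integral {0..1} (\<lambda>x. 2 * (\<sigma> t0 x * ((u t0 x \<bullet> (\<sigma> t0 x *\<^sub>R u2 t0 x + (2 * s1 t0 x) *\<^sub>R u1 t0 x))^2
        - (L t0)^2 * ((\<sigma> t0 x *\<^sub>R u2 t0 x + (2 * s1 t0 x) *\<^sub>R u1 t0 x) \<bullet> (\<sigma> t0 x *\<^sub>R u2 t0 x + (2 * s1 t0 x) *\<^sub>R u1 t0 x)))))"
  proof (rule integral_cong)
    fix x
    have It: "I t0 = \<sigma> t0 x * (u1 t0 x \<bullet> u1 t0 x) - (L t0)^2 * s2 t0 x"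
      using sig_pt[OF t0, of x] by (simp add: power2_norm_eq_inner)
    have ai: "- ((L t0)^2) * (f' x \<bullet> v t0 x) + (\<sigma> t0 x * (u1 t0 x \<bullet> u1 t0 x) - (L t0)^2 * s2 t0 x) * (u1 t0 x \<bullet> u1 t0 x) * (\<sigma> t0 x)^2
       = \<sigma> t0 x * ((u t0 x \<bullet> (\<sigma> t0 x *\<^sub>R u2 t0 x + (2 * s1 t0 x) *\<^sub>R u1 t0 x))^2
        - (L t0)^2 * ((\<sigma> t0 x *\<^sub>R u2 t0 x + (2 * s1 t0 x) *\<^sub>R u1 t0 x) \<bullet> (\<sigma> t0 x *\<^sub>R u2 t0 x + (2 * s1 t0 x) *\<^sub>R u1 t0 x)))"
      unfolding f'_def v_def by (rule alg_ident[OF uu[OF t0] u_u1[OF t0] u_u2[OF t0]])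
    show "-2 * (L t0)^2 * (f' x \<bullet> v t0 x) + 2 * I t0 * (\<kappa> t0 x * (\<sigma> t0 x)^2) = 2 * (\<sigma> t0 x * ((u t0 x \<bullet> (\<sigma> t0 x *\<^sub>R u2 t0 x + (2 * s1 t0 x) *\<^sub>R u1 t0 x))^2
        - (L t0)^2 * ((\<sigma> t0 x *\<^sub>R u2 t0 x + (2 * s1 t0 x) *\<^sub>R u1 t0 x) \<bullet> (\<sigma> t0 x *\<^sub>R u2 t0 x + (2 * s1 t0 x) *\<^sub>R u1 t0 x))))"
      unfolding ai[symmetric] It by (simp add: power2_norm_eq_inner algebra_simps)
  qed
  also have "\<dots> \<le> 0"
  proof -
    have "0 \<le> integral {0..1} (\<lambda>x. - (2 * (\<sigma> t0 x * ((u t0 x \<bullet> (\<sigma> t0 x *\<^sub>R u2 t0 x + (2 * s1 t0 x) *\<^sub>R u1 t0 x))^2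
        - (L t0)^2 * ((\<sigma> t0 x *\<^sub>R u2 t0 x + (2 * s1 t0 x) *\<^sub>R u1 t0 x) \<bullet> (\<sigma> t0 x *\<^sub>R u2 t0 x + (2 * s1 t0 x) *\<^sub>R u1 t0 x))))))"
    proof (rule integral_nonneg)
      fix x assume x: "x \<in> {0..1::real}"
      define w where "w = \<sigma> t0 x *\<^sub>R u2 t0 x + (2 * s1 t0 x) *\<^sub>R u1 t0 x"
      have cs: "(u t0 x \<bullet> w)^2 \<le> (L t0)^2 * (w \<bullet> w)"
        using Cauchy_Schwarz_ineq[of "u t0 x" w] uu[OF t0, of x] by simp
      have "0 \<le> \<sigma> t0 x" by (rule sig_nonneg[OF t0 x])
      then have "\<sigma> t0 x * ((u t0 x \<bullet> w)^2 - (L t0)^2 * (w \<bullet> w)) \<le> 0"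
        using cs by (simp add: mult_nonneg_nonpos)
      then show "0 \<le> - (2 * (\<sigma> t0 x * ((u t0 x \<bullet> (\<sigma> t0 x *\<^sub>R u2 t0 x + (2 * s1 t0 x) *\<^sub>R u1 t0 x))^2
        - (L t0)^2 * ((\<sigma> t0 x *\<^sub>R u2 t0 x + (2 * s1 t0 x) *\<^sub>R u1 t0 x) \<bullet> (\<sigma> t0 x *\<^sub>R u2 t0 x + (2 * s1 t0 x) *\<^sub>R u1 t0 x)))))"
        unfolding w_def by simp
    qed (auto intro!: cint continuous_intros)
    then show ?thesis by simp
  qed
  finally show ?thesis .
qed

end

context flow begin

lemma dL2: assumes t: "t \<in> V"
  shows "((\<lambda>\<tau>. (L \<tau>)^2) has_real_derivative (-2 * I t / (L t)^2)) (at t)"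
proof -
  have Lp: "L t \<noteq> 0" using Lpos[OF t] by simp
  show ?thesis
    by (rule DERIV_cong[OF DERIV_power[OF partI[OF t], of 2]]) (use Lp in \<open>simp add: field_simps power3_eq_cube power2_eq_square\<close>)
qed

lemma part2: assumes t0: "t0 \<in> V"
  shows "\<exists>D2. ((\<lambda>\<tau>. -2 * I \<tau> / (L \<tau>)^2) has_real_derivative D2) (at t0) \<and> 0 \<le> D2"
proof -
  obtain Ip where Ip: "((\<lambda>\<tau>. I \<tau>) has_real_derivative Ip) (at t0)" using I_deriv[OF t0] by blast
  define Lsqp where "Lsqp = -2 * I t0 / (L t0)^2"
  define Gp where "Gp = integral {0..1} (\<lambda>s. (u1 t0 s \<bullet> dt u1 t0 s + dt u1 t0 s \<bullet> u1 t0 s) * (\<sigma> t0 s)^2)"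
  have dL: "((\<lambda>\<tau>. (L \<tau>)^2) has_real_derivative Lsqp) (at t0)" unfolding Lsqp_def by (rule dL2[OF t0])
  have dG: "((\<lambda>\<tau>. G t0 \<tau>) has_real_derivative Gp) (at t0)" unfolding Gp_def by (rule G_deriv[OF t0])
  have dH: "((\<lambda>\<tau>. ((L \<tau>)^2 * Aco t0 + G t0 \<tau>) - I \<tau>) has_real_derivative ((Lsqp * Aco t0 + Gp) - Ip)) (at t0)"
    by (intro DERIV_diff DERIV_add DERIV_cmult_right dL dG Ip)
  define d where "d = min t0 (T - t0)"
  have d: "0 < d" using t0 by (auto simp: d_def)
  have "(Lsqp * Aco t0 + Gp) - Ip = 0"
  proof (rule DERIV_local_min[OF dH d], intro allI impI)
    fix y assume "\<bar>t0 - y\<bar> < d"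
    then have y: "y \<in> V" using t0 by (auto simp: d_def)
    have "(L t0)^2 * Aco t0 + G t0 t0 - I t0 = 0" using energy[OF t0] by (simp add: Aco_def G_def)
    moreover have "0 \<le> (L y)^2 * Aco t0 + G t0 y - I y" using minimality[OF t0 y] by simp
    ultimately show "(L t0)^2 * Aco t0 + G t0 t0 - I t0 \<le> (L y)^2 * Aco t0 + G t0 y - I y" by simp
  qed
  then have e3: "Ip = Lsqp * Aco t0 + Gp" by simp
  have Lnz: "(L t0)^2 \<noteq> 0" using Lpos[OF t0] by simp
  have dD: "((\<lambda>\<tau>. -2 * I \<tau> / (L \<tau>)^2) has_real_derivative
      (-2 * Ip * (L t0)^2 - (-2 * I t0) * Lsqp) / ((L t0)^2 * (L t0)^2)) (at t0)"
    using DERIV_divide[OF DERIV_cmult[OF Ip, of "-2"] dL Lnz] by simp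
  have "0 \<le> (-2 * Ip * (L t0)^2 - (-2 * I t0) * Lsqp) / ((L t0)^2 * (L t0)^2)"
  proof (rule final_alg[where B = "G t0 t0" and A = "Aco t0" and Gp = Gp])
    show "0 < L t0" by (rule Lpos[OF t0])
    show "I t0 = (L t0)^2 * Aco t0 + G t0 t0" using energy[OF t0] by (simp add: Aco_def G_def)
    show "Lsqp = -2 * I t0 / (L t0)^2" by (simp add: Lsqp_def)
    show "Ip = Lsqp * Aco t0 + Gp" by (rule e3)
    show "Gp * (L t0)^4 + 2 * I t0 * G t0 t0 \<le> 0" unfolding Gp_def by (rule Gp_ineq[OF t0])
  qed
  then show ?thesis using dD by blast
qed

end

theorem proposition2p5:
  fixes \<eta> :: "real \<Rightarrow> real \<Rightarrow> 'a::euclidean_space"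
    and \<sigma> :: "real \<Rightarrow> real \<Rightarrow> real"
    and tstar :: real
  assumes dim: "DIM('a) \<ge> 2"
    and flow: "ucsf tstar \<eta> \<sigma>"
  shows "(\<forall>t\<in>{0<..<tstar}.
           (curve_length \<eta> has_real_derivative
              (- integral {0..1} (\<lambda>s. \<sigma> t s * (norm (ds (ds \<eta>) t s))^2) / (curve_length \<eta> t)^3))
             (at t)) \<and>
         (\<exists>D. (\<forall>t\<in>{0<..<tstar}. ((\<lambda>\<tau>. (curve_length \<eta> \<tau>)^2) has_real_derivative D t) (at t)) \<and>
             (\<forall>t\<in>{0<..<tstar}. \<exists>D2. (D has_real_derivative D2) (at t) \<and> 0 \<le> D2))"
proof -
  interpret flow tstar \<eta> \<sigma> by unfold_locales (rule flow)
  define D where "D = (\<lambda>\<tau>. -2 * I \<tau> / (L \<tau>)^2)"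
  have A: "\<forall>t\<in>{0<..<tstar}. (curve_length \<eta> has_real_derivative
              (- integral {0..1} (\<lambda>s. \<sigma> t s * (norm (ds (ds \<eta>) t s))^2) / (curve_length \<eta> t)^3)) (at t)"
    using partI by blast
  have B: "\<forall>t\<in>{0<..<tstar}. ((\<lambda>\<tau>. (curve_length \<eta> \<tau>)^2) has_real_derivative D t) (at t)"
    unfolding D_def using dL2 by blast
  have C: "\<forall>t\<in>{0<..<tstar}. \<exists>D2. (D has_real_derivative D2) (at t) \<and> 0 \<le> D2"
    unfolding D_def using part2 by blast
  show ?thesis using A B C by blast
qed


end
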